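(* Let $H$ be a 0-SYM filter such that every solution $z$ of $H(z)=1$ satisfies $\operatorname{Re}(z)>0$. Then: (A) every pole of $H$ in $\mathbb C$ lies on the imaginary axis $i\mathbb R$; (B) every solution $z$ of $H(z)=-1$ satisfies $\operatorname{Re}(z)<0$.
   Context: A 0-SYM filter is a rational function $H(z)$ with real coefficients satisfying $H(z)^2+H(-z)^2=1$ and $H(z)=H(z^{-1})$. *)

theory Defs
  imports "HOL-Analysis.Analysis" "HOL-Computational_Algebra.Computational_Algebra"
begin

text \<open>A real rational function H = p/q is represented by a pair of real polynomials
  in lowest terms (q nonzero, p and q coprime). It is evaluated at complex points.\<close>

definition rf_defined :: "real poly \<Rightarrow> complex \<Rightarrow> bool" where
  "rf_defined q z \<longleftrightarrow> poly (map_poly complex_of_real q) z \<noteq> 0"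

definition rf_eval :: "real poly \<Rightarrow> real poly \<Rightarrow> complex \<Rightarrow> complex" where
  "rf_eval p q z = poly (map_poly complex_of_real p) z / poly (map_poly complex_of_real q) z"

definition rf_pole :: "real poly \<Rightarrow> complex \<Rightarrow> bool" where
  "rf_pole q z \<longleftrightarrow> poly (map_poly complex_of_real q) z = 0"

definition zero_sym :: "real poly \<Rightarrow> real poly \<Rightarrow> bool" where
  "zero_sym p q \<longleftrightarrow> q \<noteq> 0 \<and> coprime p q \<and>
     (\<forall>z. rf_defined q z \<and> rf_defined q (-z) \<longrightarrow>
          (rf_eval p q z)\<^sup>2 + (rf_eval p q (-z))\<^sup>2 = 1) \<and>
     (\<forall>z. z \<noteq> 0 \<and> rf_defined q z \<and> rf_defined q (inverse z) \<longrightarrow>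
          rf_eval p q z = rf_eval p q (inverse z))"

end

theory Submission
  imports Defs "HOL-Computational_Algebra.Field_as_Ring"
begin


lemma root_exists:
  fixes p :: "complex poly"
  assumes "degree p > 0" shows "\<exists>z. poly p z = 0"
  using assms fundamental_theorem_of_algebra[of p] constant_degree[of p] by auto

lemma coprime_noroot:
  fixes a b :: "complex poly"
  assumes "a \<noteq> 0" and "\<And>z. poly a z = 0 \<Longrightarrow> poly b z \<noteq> 0"
  shows "coprime a b"
proof -
  let ?d = "gcd a b"
  have d0: "?d \<noteq> 0" using assms(1) by simp
  have "degree ?d = 0"
  proof (rule ccontr)
    assume "degree ?d \<noteq> 0"
    then obtain z where z: "poly ?d z = 0" using root_exists by auto
    have "poly a z = 0" using z by (metis dvd_mult_div_cancel gcd_dvd1 mult_eq_0_iff poly_mult)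
    moreover have "poly b z = 0" using z by (metis dvd_mult_div_cancel gcd_dvd2 mult_eq_0_iff poly_mult)
    ultimately show False using assms(2) by blast
  qed
  then have "is_unit ?d" using is_unit_iff_degree d0 by blast
  then show ?thesis using is_unit_gcd by blast
qed

lemma factor_ineq:
  fixes x r :: complex
  assumes "Re r > 0" "Re x \<ge> 0"
  shows "cmod (x - r) \<le> cmod (- cnj x - r)" "Re x > 0 \<Longrightarrow> cmod (x - r) < cmod (- cnj x - r)"
proof -
  have e1: "cmod (x - r) = sqrt ((Re x - Re r)^2 + (Im x - Im r)^2)" by (simp add: cmod_def)
  have e2: "cmod (- cnj x - r) = sqrt ((Re x + Re r)^2 + (Im x - Im r)^2)"
    by (simp add: cmod_def power2_eq_square algebra_simps)
  have "(Re x - Re r)^2 \<le> (Re x + Re r)^2" using assms by (simp add: power2_eq_square algebra_simps)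
  then show "cmod (x - r) \<le> cmod (- cnj x - r)" unfolding e1 e2 by simp
  assume "Re x > 0"
  then have "(Re x - Re r)^2 < (Re x + Re r)^2" using assms by (simp add: power2_eq_square algebra_simps)
  then show "cmod (x - r) < cmod (- cnj x - r)" unfolding e1 e2 by simp
qed

lemma hurwitz:
  fixes k :: "complex poly"
  assumes "k \<noteq> 0" "\<And>z. poly k z = 0 \<Longrightarrow> Re z > 0" "Re x \<ge> 0"
  shows "cmod (poly k x) \<le> cmod (poly k (- cnj x)) \<and>
         (Re x > 0 \<and> degree k > 0 \<longrightarrow> cmod (poly k x) < cmod (poly k (- cnj x)))"
  using assms
proof (induction "degree k" arbitrary: k)
  case 0
  then obtain c where "k = [:c:]" by (metis degree_eq_zeroE)
  then show ?case using 0 by simp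
next
  case (Suc n)
  then obtain r where r: "poly k r = 0" using root_exists by (metis zero_less_Suc)
  then obtain k' where kk: "k = [:-r,1:] * k'" using poly_eq_0_iff_dvd by (metis dvdE)
  have k'0: "k' \<noteq> 0" using Suc.prems kk by auto
  have "degree k = 1 + degree k'" unfolding kk by (subst degree_mult_eq) (use k'0 in auto)
  then have dk: "degree k' = n" using Suc.hyps(2) by simp
  have rk: "\<And>z. poly k' z = 0 \<Longrightarrow> Re z > 0" using Suc.prems(2) kk by simp
  have IH: "cmod (poly k' x) \<le> cmod (poly k' (- cnj x))"
    using Suc.hyps(1)[OF dk[symmetric] k'0 rk Suc.prems(3)] by blast
  have Rr: "Re r > 0" using Suc.prems(2) r by blast
  have F: "cmod (x - r) \<le> cmod (- cnj x - r)" "Re x > 0 \<Longrightarrow> cmod (x - r) < cmod (- cnj x - r)"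
    using factor_ineq[OF Rr Suc.prems(3)] by auto
  have pk: "\<And>z. poly k z = (z - r) * poly k' z" by (subst kk, subst poly_mult) simp
  have nz: "poly k' (- cnj x) \<noteq> 0" using rk[of "- cnj x"] Suc.prems(3) by auto
  show ?case
  proof
    show "cmod (poly k x) \<le> cmod (poly k (- cnj x))"
      unfolding pk norm_mult by (intro mult_mono F(1) IH) auto
    show "Re x > 0 \<and> degree k > 0 \<longrightarrow> cmod (poly k x) < cmod (poly k (- cnj x))"
    proof
      assume "Re x > 0 \<and> degree k > 0"
      then have s: "cmod (x - r) < cmod (- cnj x - r)" using F(2) by blast
      have "cmod (x - r) * cmod (poly k' x) \<le> cmod (x - r) * cmod (poly k' (- cnj x))"
        using IH by (simp add: mult_left_mono)
      also have "\<dots> < cmod (- cnj x - r) * cmod (poly k' (- cnj x))"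
        using s nz by (simp add: mult_strict_right_mono)
      finally show "cmod (poly k x) < cmod (poly k (- cnj x))" unfolding pk norm_mult .
    qed
  qed
qed


lemma lift0:
  fixes h r :: "complex poly"
  assumes "r \<noteq> 0" "\<And>z. poly r z \<noteq> 0 \<Longrightarrow> poly h z = 0"
  shows "h = 0"
proof -
  have "\<forall>z. poly (h * r) z = 0" using assms(2) by auto
  then have "h * r = 0" using poly_all_0_iff_0 by blast
  then show ?thesis using assms(1) by simp
qed

lemma mp_add: "map_poly complex_of_real (a + b) = map_poly complex_of_real a + map_poly complex_of_real b"
  by (rule poly_eqI) (simp add: coeff_map_poly)

lemma mp_mult: "map_poly complex_of_real (a * b) = map_poly complex_of_real a * map_poly complex_of_real b"
  by (rule poly_eqI) (simp add: coeff_map_poly coeff_mult)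



theorem theorem3:
  fixes p q :: "real poly"
  assumes "zero_sym p q"
    and "\<forall>z. rf_defined q z \<and> rf_eval p q z = 1 \<longrightarrow> Re z > 0"
  shows "(\<forall>z. rf_pole q z \<longrightarrow> Re z = 0) \<and>
         (\<forall>z. rf_defined q z \<and> rf_eval p q z = -1 \<longrightarrow> Re z < 0)"
proof -
  define pc where "pc = map_poly complex_of_real p"
  define qc where "qc = map_poly complex_of_real q"
  define pn where "pn = pcompose pc [:0,-1:]"
  define qn where "qn = pcompose qc [:0,-1:]"
  have q0: "q \<noteq> 0" and cop: "coprime p q" using assms(1) unfolding zero_sym_def by auto
  have S1: "\<And>z. poly qc z \<noteq> 0 \<Longrightarrow> poly qc (-z) \<noteq> 0 \<Longrightarrow>
      (poly pc z / poly qc z)^2 + (poly pc (-z) / poly qc (-z))^2 = 1"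
    using assms(1) unfolding zero_sym_def rf_defined_def rf_eval_def pc_def qc_def by auto
  have qc0: "qc \<noteq> 0" using q0 by (simp add: qc_def map_poly_eq_0_iff)
  have pn_ev: "\<And>z. poly pn z = poly pc (-z)" by (simp add: pn_def poly_pcompose)
  have qn_ev: "\<And>z. poly qn z = poly qc (-z)" by (simp add: qn_def poly_pcompose)
  have cpn: "\<And>n. coeff pn n = (-1)^n * coeff pc n" unfolding pn_def by (rule coeff_pcompose_linear)
  have rpc: "\<And>n. coeff pc n \<in> \<real>" by (simp add: pc_def coeff_map_poly)
  have rqc: "\<And>n. coeff qc n \<in> \<real>" by (simp add: qc_def coeff_map_poly)
  have rpn: "\<And>n. coeff pn n \<in> \<real>" using rpc by (simp add: cpn)
  have cjp: "\<And>z. cnj (poly pc z) = poly pc (cnj z)" using poly_cnj_real rpc by blast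
  have cjq: "\<And>z. cnj (poly qc z) = poly qc (cnj z)" using poly_cnj_real rqc by blast
  have cjpn: "\<And>z. cnj (poly pn z) = poly pn (cnj z)" using poly_cnj_real rpn by blast
  have nocommon: "\<And>z. poly pc z = 0 \<Longrightarrow> poly qc z \<noteq> 0"
  proof -
    fix z assume pz: "poly pc z = 0"
    define u where "u = fst (bezout_coefficients p q)"
    define v where "v = snd (bezout_coefficients p q)"
    have "u * p + v * q = 1"
      using bezout_coefficients_fst_snd[of p q] cop unfolding u_def v_def
      by (simp add: coprime_iff_gcd_eq_1)
    then have "map_poly complex_of_real (u * p + v * q) = 1" by simp
    then have "poly (map_poly complex_of_real u) z * poly pc z + poly (map_poly complex_of_real v) z * poly qc z = 1"
      unfolding mp_add mp_mult pc_def qc_def by (metis poly_1 poly_add poly_mult)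
    then show "poly qc z \<noteq> 0" using pz by auto
  qed
  have qn0: "qn \<noteq> 0"
  proof
    assume "qn = 0"
    then have "\<And>z. poly qc z = 0" using qn_ev by (metis minus_minus poly_0)
    then show False using qc0 poly_all_0_iff_0 by blast
  qed
  have E: "pc^2*qn^2 + pn^2*qc^2 = qc^2*qn^2"
  proof -
    have "pc^2*qn^2 + pn^2*qc^2 - qc^2*qn^2 = 0"
    proof (rule lift0[of "qc * qn"])
      show "qc * qn \<noteq> 0" using qc0 qn0 by simp
      fix z assume "poly (qc * qn) z \<noteq> 0"
      then have a: "poly qc z \<noteq> 0" "poly qc (-z) \<noteq> 0" using qn_ev by auto
      define A where "A = poly pc z"
      define B where "B = poly qc z"
      define C where "C = poly pc (-z)"
      define D where "D = poly qc (-z)"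
      have B0: "B \<noteq> 0" and D0: "D \<noteq> 0" using a by (simp_all add: B_def D_def)
      have e: "(A/B)^2 + (C/D)^2 = 1" using S1[OF a] by (simp add: A_def B_def C_def D_def)
      have "A^2*D^2 + C^2*B^2 = ((A/B)^2 + (C/D)^2) * (B^2*D^2)"
        using B0 D0 by (simp add: power_divide distrib_right)
      then have "A^2*D^2 + C^2*B^2 - B^2*D^2 = 0" using e by simp
      then show "poly (pc^2*qn^2 + pn^2*qc^2 - qc^2*qn^2) z = 0"
        by (simp add: qn_ev pn_ev A_def B_def C_def D_def)
    qed
    then show ?thesis by (metis eq_iff_diff_eq_0)
  qed
  have "coprime qc pc"
  proof (rule coprime_noroot[OF qc0])
    fix z assume "poly qc z = 0" then show "poly pc z \<noteq> 0" using nocommon by blast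
  qed
  then have cop2: "coprime (qc^2) (pc^2)" by simp
  have "qc^2 dvd pc^2 * qn^2"
  proof
    have "pc^2*qn^2 = qc^2*qn^2 - pn^2*qc^2" using E by (metis add_diff_cancel_right')
    also have "\<dots> = qc^2*(qn^2 - pn^2)" by (simp add: right_diff_distrib mult.commute)
    finally show "pc^2 * qn^2 = qc^2 * (qn^2 - pn^2)" .
  qed
  then have "qc^2 dvd qn^2" using coprime_dvd_mult_right_iff[OF cop2] by blast
  then have "qc dvd qn" by simp
  then obtain w where w: "qn = qc * w" by (elim dvdE)
  have w0: "w \<noteq> 0" using w qn0 by auto
  have "degree qn = degree qc" by (simp add: qn_def degree_pcompose)
  moreover have "degree qn = degree qc + degree w" unfolding w using qc0 w0 by (rule degree_mult_eq)
  ultimately have "degree w = 0" by simp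
  then obtain c where wc: "w = [:c:]" by (metis degree_eq_zeroE)
  have qnc: "\<And>z. poly qc (-z) = c * poly qc z"
  proof -
    fix z
    have "poly qc (-z) = poly qn z" by (simp only: qn_ev)
    also have "\<dots> = poly (qc * [:c:]) z" by (simp only: w wc)
    also have "\<dots> = c * poly qc z" by simp
    finally show "poly qc (-z) = c * poly qc z" .
  qed
  obtain z0 where z0: "poly qc z0 \<noteq> 0" using qc0 poly_all_0_iff_0 by blast
  have h2: "poly qc z0 = c * poly qc (-z0)" using qnc[of "-z0"] by simp
  also have "\<dots> = c * (c * poly qc z0)" by (simp only: qnc)
  finally have "poly qc z0 = c * c * poly qc z0" by (simp add: mult.assoc)
  then have "c * c = 1" using z0 by simp
  then have c1: "c = 1 \<or> c = -1" by (metis power2_eq_square power2_eq_1_iff)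
  have cnjc: "cnj c = c" using c1 by auto
  have PI: "\<And>z. (poly pc z)^2 + (poly pn z)^2 = (poly qc z)^2"
  proof -
    have "pc^2 + pn^2 - qc^2 = 0"
    proof (rule lift0[OF qc0])
      fix z assume a: "poly qc z \<noteq> 0"
      have "(poly pc z)^2 * (c * poly qc z)^2 + (poly pn z)^2 * (poly qc z)^2
           = (poly qc z)^2 * (c * poly qc z)^2"
        using arg_cong[OF E, of "\<lambda>h. poly h z"] by (simp add: qn_ev qnc)
      moreover have cc: "(c * poly qc z)^2 = (poly qc z)^2"
        using \<open>c*c = 1\<close> by (simp add: power_mult_distrib power2_eq_square)
      ultimately have "(poly pc z)^2 * (poly qc z)^2 + (poly pn z)^2 * (poly qc z)^2
           = (poly qc z)^2 * (poly qc z)^2" by simp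
      then have "((poly pc z)^2 + (poly pn z)^2 - (poly qc z)^2) * (poly qc z)^2 = 0"
        by (simp add: algebra_simps)
      then show "poly (pc^2 + pn^2 - qc^2) z = 0" using a by simp
    qed
    then show "\<And>z. (poly pc z)^2 + (poly pn z)^2 = (poly qc z)^2"
      by (metis eq_iff_diff_eq_0 poly_add poly_diff poly_power poly_0)
  qed
  define P1 where "P1 = pc + smult \<i> pn"
  define P2 where "P2 = pc - smult \<i> pn"
  have P1P2: "P1 * P2 = qc^2"
  proof (rule iffD1[OF poly_eq_poly_eq_iff], rule ext)
    fix z show "poly (P1 * P2) z = poly (qc^2) z"
      using PI[of z] by (simp add: P1_def P2_def algebra_simps power2_eq_square)
  qed
  have P10: "P1 \<noteq> 0" using P1P2 qc0 by auto
  have sum12: "\<And>z. poly P1 z + poly P2 z = 2 * poly pc z" by (simp add: P1_def P2_def)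
  have cop12: "coprime P1 P2"
  proof (rule coprime_noroot[OF P10])
    fix z assume a: "poly P1 z = 0"
    show "poly P2 z \<noteq> 0"
    proof
      assume b: "poly P2 z = 0"
      then have "poly pc z = 0" using a sum12[of z] by simp
      moreover then have "poly pn z = 0" using a by (simp add: P1_def)
      ultimately show False using PI[of z] nocommon by simp
    qed
  qed
  define g where "g = gcd P1 qc"
  have "g^2 = normalize P1"
  proof -
    have "g^2 = gcd (P1^2) (qc^2)" by (simp add: g_def)
    also have "\<dots> = gcd (P1 * P1) (P1 * P2)" by (simp add: P1P2 power2_eq_square)
    also have "\<dots> = normalize (P1 * gcd P1 P2)" by (rule gcd_mult_left)
    also have "\<dots> = normalize P1" using cop12 by (simp add: coprime_iff_gcd_eq_1)
    finally show ?thesis .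
  qed
  define u where "u = lead_coeff P1"
  have u0: "u \<noteq> 0" using P10 by (simp add: u_def)
  have P1g: "P1 = [:u:] * g^2"
    using unit_factor_mult_normalize[of P1] \<open>g^2 = normalize P1\<close>
    by (simp add: u_def unit_factor_poly_def)
  have P1ev: "\<And>z. poly P1 z = u * (poly g z)^2" by (subst P1g) simp
  have g0: "g \<noteq> 0" using P10 by (simp add: g_def)
  define T where "T = P1 - qc"
  have "g dvd T" unfolding T_def g_def by simp
  define k where "k = T div g"
  have Tgk: "T = g * k" unfolding k_def using \<open>g dvd T\<close> by simp
  have K1: "\<And>x. cnj (poly P1 (- cnj x)) = - \<i> * poly P1 x"
  proof -
    fix x
    have "cnj (poly pc (- cnj x)) = poly pc (-x)" using cjp[of "- cnj x"] by simp
    moreover have "cnj (poly pc (cnj x)) = poly pc x" using cjp[of "cnj x"] by simp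
    ultimately show "cnj (poly P1 (- cnj x)) = - \<i> * poly P1 x"
      by (simp add: P1_def pn_ev algebra_simps)
  qed
  have K2: "\<And>x. poly qc (- cnj x) = c * cnj (poly qc x)"
  proof -
    fix x
    have "cnj (poly qc (- cnj x)) = poly qc (-x)" using cjq[of "- cnj x"] by simp
    then have "poly qc (- cnj x) = cnj (c * poly qc x)" using qnc by (metis complex_cnj_cnj)
    then show "poly qc (- cnj x) = c * cnj (poly qc x)" using cnjc by simp
  qed
  have K3: "\<And>x. cmod (poly g (- cnj x)) = cmod (poly g x)"
  proof -
    fix x
    have "cmod (poly P1 (- cnj x)) = cmod (poly P1 x)"
      using arg_cong[OF K1[of x], of cmod] by (simp add: norm_mult)
    then have "cmod u * cmod (poly g (- cnj x))^2 = cmod u * cmod (poly g x)^2"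
      by (simp add: P1ev norm_mult norm_power)
    then have "cmod (poly g (- cnj x))^2 = cmod (poly g x)^2" using u0 by simp
    then show "cmod (poly g (- cnj x)) = cmod (poly g x)" by (simp add: power2_eq_iff_nonneg)
  qed
  have K4: "\<And>z. poly P2 z = cnj (poly P1 (cnj z))"
    using cjp cjpn by (simp add: P1_def P2_def)
  have rootk: "\<And>z. poly k z = 0 \<Longrightarrow> Re z > 0"
  proof -
    fix z assume kz: "poly k z = 0"
    then have "poly T z = 0" by (simp add: Tgk)
    then have Pq: "poly P1 z = poly qc z" by (simp add: T_def)
    show "Re z > 0"
    proof (cases "poly qc z = 0")
      case False
      have "poly P1 z * poly P2 z = (poly qc z)^2" using arg_cong[OF P1P2, of "\<lambda>h. poly h z"] by simp
      then have "poly P2 z = poly qc z" using Pq False by (simp add: power2_eq_square)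
      then have "poly pc z = poly qc z" using Pq sum12[of z] by simp
      then have "rf_defined q z \<and> rf_eval p q z = 1" using False
        by (simp add: rf_defined_def rf_eval_def pc_def[symmetric] qc_def[symmetric])
      then show ?thesis using assms(2) by blast
    next
      case True
      then have "poly g z = 0" using Pq P1ev u0 by simp
      define d where "d = [:-z,1:]"
      have dg: "d dvd g" using \<open>poly g z = 0\<close> by (simp add: d_def poly_eq_0_iff_dvd)
      have dk: "d dvd k" using kz by (simp add: d_def poly_eq_0_iff_dvd)
      have "d * g dvd g * g" using dg by simp
      also have "g * g dvd P1" unfolding P1g power2_eq_square by (rule dvd_triv_right)
      finally have h1: "d * g dvd P1" .
      have h2: "d * g dvd T" unfolding Tgk using dk by (simp add: mult.commute mult_dvd_mono)
      have "qc = P1 - T" by (simp add: T_def)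
      then have h3: "d * g dvd qc" using h1 h2 by (metis dvd_diff)
      have "d * g dvd g" unfolding g_def using h1 h3 by (simp add: g_def)
      then have "degree (d * g) \<le> degree g" using g0 dvd_imp_degree_le by blast
      moreover have "degree (d * g) = degree d + degree g" using g0 by (intro degree_mult_eq) (auto simp: d_def)
      moreover have "degree d = 1" by (simp add: d_def)
      ultimately show ?thesis by simp
    qed
  qed
  have ineq: "\<And>x. k \<noteq> 0 \<Longrightarrow> Re x \<ge> 0 \<Longrightarrow> cmod (poly T x) \<le> cmod (poly T (- cnj x)) \<and>
        (Re x > 0 \<and> degree k > 0 \<and> poly g x \<noteq> 0 \<longrightarrow> cmod (poly T x) < cmod (poly T (- cnj x)))"
  proof -
    fix x assume k0: "k \<noteq> 0" and Rx: "Re x \<ge> 0"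
    have H: "cmod (poly k x) \<le> cmod (poly k (- cnj x)) \<and>
         (Re x > 0 \<and> degree k > 0 \<longrightarrow> cmod (poly k x) < cmod (poly k (- cnj x)))"
      using hurwitz[OF k0 rootk Rx] by blast
    have e1: "cmod (poly T x) = cmod (poly g x) * cmod (poly k x)" by (simp add: Tgk norm_mult)
    have e2: "cmod (poly T (- cnj x)) = cmod (poly g x) * cmod (poly k (- cnj x))"
      by (simp add: Tgk norm_mult K3)
    show "cmod (poly T x) \<le> cmod (poly T (- cnj x)) \<and>
        (Re x > 0 \<and> degree k > 0 \<and> poly g x \<noteq> 0 \<longrightarrow> cmod (poly T x) < cmod (poly T (- cnj x)))"
      unfolding e1 e2 using H by (auto intro: mult_left_mono mult_strict_left_mono)
  qed
  have degk: "degree qc > 0 \<Longrightarrow> degree k > 0"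
  proof -
    assume dq: "degree qc > 0"
    define n where "n = degree qc"
    have cT: "coeff T n = complex_of_real (coeff p n - coeff q n) + \<i> * complex_of_real ((-1)^n * coeff p n)"
      by (simp add: T_def P1_def cpn pc_def qc_def coeff_map_poly)
    have bq: "coeff q n \<noteq> 0"
    proof -
      have "coeff qc n \<noteq> 0" using qc0 by (simp add: n_def)
      then show ?thesis by (simp add: qc_def coeff_map_poly)
    qed
    have cT0: "coeff T n \<noteq> 0"
    proof
      assume "coeff T n = 0"
      then have "Im (coeff T n) = 0" "Re (coeff T n) = 0" by simp_all
      then have "(-1)^n * coeff p n = 0" "coeff p n - coeff q n = 0" unfolding cT by simp_all
      then show False using bq by simp
    qed
    then have T0: "T \<noteq> 0" by auto
    have dTn: "n \<le> degree T" using cT0 le_degree by blast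
    have dTP: "degree P1 \<le> degree T"
    proof (cases "degree P1 \<le> n")
      case True then show ?thesis using dTn by simp
    next
      case False
      have "degree T = degree (P1 + - qc)" by (simp add: T_def)
      also have "\<dots> = degree P1" using False by (intro degree_add_eq_left) (simp add: n_def)
      finally show ?thesis by simp
    qed
    have dP: "degree P1 = 2 * degree g"
    proof -
      have "degree P1 = degree ([:u:] * g^2)" by (simp only: P1g[symmetric])
      also have "\<dots> = degree (g^2)" using u0 by simp
      also have "\<dots> = 2 * degree g" using g0 by (simp add: degree_power_eq)
      finally show ?thesis .
    qed
    have k0: "k \<noteq> 0" using T0 Tgk by auto
    have "degree T = degree g + degree k" unfolding Tgk using g0 k0 by (rule degree_mult_eq)
    then show "degree k > 0" using dTn dTP dP dq unfolding n_def by linarith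
  qed
  show ?thesis
  proof (intro conjI allI impI)
    fix x0 assume "rf_pole q x0"
    then have qx0: "poly qc x0 = 0" by (simp add: rf_pole_def qc_def)
    have dq: "degree qc > 0"
    proof (rule ccontr)
      assume "\<not> degree qc > 0"
      then obtain a where "qc = [:a:]" by (metis degree_eq_zeroE neq0_conv)
      then show False using qc0 qx0 by simp
    qed
    have dk: "degree k > 0" using degk[OF dq] .
    have k0: "k \<noteq> 0" using dk by auto
    show "Re x0 = 0"
    proof (rule ccontr)
      assume R0: "Re x0 \<noteq> 0"
      obtain x1 where x1: "Re x1 > 0" "poly qc x1 = 0"
      proof (cases "Re x0 > 0")
        case True then show ?thesis using that qx0 by blast
      next
        case False
        then have "Re (-x0) > 0" using R0 by simp
        moreover have "poly qc (-x0) = 0" using qnc qx0 by simp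
        ultimately show ?thesis using that by blast
      qed
      have qcx1: "poly qc (cnj x1) = 0" using cjq[of x1] x1(2) by simp
      have "poly P1 x1 \<noteq> 0 \<or> poly P1 (cnj x1) \<noteq> 0"
      proof (rule ccontr)
        assume "\<not> ?thesis"
        then have "poly P1 x1 = 0" "poly P2 x1 = 0" using K4[of x1] by auto
        then have "poly pc x1 = 0" using sum12[of x1] by simp
        then show False using nocommon x1(2) by blast
      qed
      moreover have "Re (cnj x1) > 0" using x1 by simp
      ultimately obtain y where y: "Re y > 0" "poly qc y = 0" "poly P1 y \<noteq> 0"
        using x1 qcx1 \<open>Re (cnj x1) > 0\<close> by blast
      have gy: "poly g y \<noteq> 0" using y(3) P1ev by auto
      have Ty: "poly T y = poly P1 y" using y(2) by (simp add: T_def)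
      have "poly qc (- cnj y) = 0" using K2[of y] y(2) by simp
      then have "poly T (- cnj y) = poly P1 (- cnj y)" by (simp add: T_def)
      then have "cmod (poly T (- cnj y)) = cmod (poly P1 y)"
        using arg_cong[OF K1[of y], of cmod] by (simp add: norm_mult)
      moreover have "cmod (poly T y) < cmod (poly T (- cnj y))"
        using ineq[OF k0, of y] y(1) dk gy by auto
      ultimately show False using Ty by simp
    qed
  next
    fix x assume a: "rf_defined q x \<and> rf_eval p q x = -1"
    then have qx: "poly qc x \<noteq> 0" by (simp add: rf_defined_def qc_def)
    have px: "poly pc x = - poly qc x"
      using a qx by (simp add: rf_eval_def pc_def[symmetric] qc_def[symmetric] field_simps)
    have "(poly pn x)^2 = 0" using PI[of x] px by simp
    then have pnx: "poly pn x = 0" by simp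
    have P1x: "poly P1 x = - poly qc x" using px pnx by (simp add: P1_def)
    have Tx: "poly T x = - 2 * poly qc x" using P1x by (simp add: T_def)
    have T0: "T \<noteq> 0" using Tx qx by auto
    have k0: "k \<noteq> 0" using T0 Tgk by auto
    show "Re x < 0"
    proof (rule ccontr)
      assume "\<not> Re x < 0"
      then have Rx: "Re x \<ge> 0" by simp
      have le: "cmod (poly T x) \<le> cmod (poly T (- cnj x))" using ineq[OF k0 Rx] by blast
      have "poly P1 (- cnj x) = cnj (- \<i> * poly P1 x)" using K1[of x] by (metis complex_cnj_cnj)
      then have "poly P1 (- cnj x) = - \<i> * cnj (poly qc x)" using P1x by simp
      then have "poly T (- cnj x) = (- \<i> - c) * cnj (poly qc x)"
        using K2[of x] by (simp add: T_def algebra_simps)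
      then have e2: "cmod (poly T (- cnj x)) = cmod (- \<i> - c) * cmod (poly qc x)"
        by (simp add: norm_mult)
      have "cmod (- \<i> - c) = sqrt 2" using c1 by (auto simp: cmod_def)
      then have "2 * cmod (poly qc x) \<le> sqrt 2 * cmod (poly qc x)"
        using le e2 Tx by (simp add: norm_mult)
      then have "2 \<le> sqrt 2" using qx by simp
      moreover have "sqrt 2 < (2::real)" by (rule real_less_lsqrt) auto
      ultimately show False by simp
    qed
  qed
qed

end
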